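(* Let $n\ge1$, $k\ge0$ be integers and define the $n\times n$ matrices $M_1(n,k)=\big(\mathcal P^+_{i+j+1}(k,0)\big)_{0\le i,j\le n-1}$ and $MP_1(n,k)=\big(\sum_{l\ge0}\mathcal P^+_{i+j+1}(k,l)\big)_{0\le i,j\le n-1}$. Then $$A(n)\cdot MP_1(n,k)=M_1(n,k)+C_1(n,k),$$ where $C_1(n,k)=(C_{i,j})_{0\le i,j\le n-1}$ has $C_{i,j}=0$ for $i\le n-2$ and $C_{n-1,j}=(xy)^{n-1}\sum_{l\ge0}\mathcal P_{j+1}(0,n-k+l)$.
   Context: Three-step paths consist of up-steps $(1,1)$, level steps $(1,0)$ and down-steps $(1,-1)$. Weights: $w((1,1))=1$, $w((1,0))=x+y$, $w((1,-1))=xy$; a path's weight is the product of its step weights. $\mathcal P_n(k,l)$ is the sum of weights of all three-step paths from $(0,k)$ to $(n,l)$; $\mathcal P^+_n(k,l)$ the same restricted to paths never running below the $x$-axis. The matrix $A(n)=(A_{n,i,j})_{0\le i,j\le n-1}$ is defined by $A_{n,i,j}=\frac{(1+x)(1+y)}{xy}$ if $i=j<n-1$; $-\frac1{xy}$ if $i=j-1<n-1$; $A_{n,n-1,n-1}=\frac{xy-(n-1)(x+y)}{xy}$; for $j<n-1$, $$A_{n,n-1,j}=\frac{(-1)^{n+j}}{xy}\sum_{l=j}^{n}\left(\binom lj\binom{n+j-1-l}{j}x^{l-j}y^{n-1-l}+\binom lj\binom{n+j-l}{j}x^{l-j}y^{n-l}\right);$$ and $0$ otherwise (binomial coefficients $\binom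 ab=0$ if $b<0$ or $a<b$). *)

theory Defs
  imports Main "HOL-Library.Groups_Big_Fun"
begin

text \<open>Three-step paths: a path of length N is a list of steps in {1,0,-1}
  (heights change by the step); weights w(up)=1, w(level)=x+y, w(down)=x*y.\<close>

definition step_wt :: "'a::field \<Rightarrow> 'a \<Rightarrow> int \<Rightarrow> 'a" where
  "step_wt x y s = (if s = 1 then 1 else if s = 0 then x + y else x * y)"

definition path_wt :: "'a::field \<Rightarrow> 'a \<Rightarrow> int list \<Rightarrow> 'a" where
  "path_wt x y ss = prod_list (map (step_wt x y) ss)"

definition paths :: "nat \<Rightarrow> int \<Rightarrow> int \<Rightarrow> int list set" where
  "paths N k l = {ss. set ss \<subseteq> {-1, 0, 1} \<and> length ss = N \<and> k + sum_list ss = l}"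

definition paths_plus :: "nat \<Rightarrow> int \<Rightarrow> int \<Rightarrow> int list set" where
  "paths_plus N k l = {ss \<in> paths N k l. \<forall>i \<le> N. k + sum_list (take i ss) \<ge> 0}"

definition PP :: "'a::field \<Rightarrow> 'a \<Rightarrow> nat \<Rightarrow> int \<Rightarrow> int \<Rightarrow> 'a" where
  "PP x y N k l = (\<Sum>ss\<in>paths N k l. path_wt x y ss)"

definition PPplus :: "'a::field \<Rightarrow> 'a \<Rightarrow> nat \<Rightarrow> int \<Rightarrow> int \<Rightarrow> 'a" where
  "PPplus x y N k l = (\<Sum>ss\<in>paths_plus N k l. path_wt x y ss)"

definition ibinom :: "int \<Rightarrow> int \<Rightarrow> nat" where
  "ibinom a b = (if b < 0 \<or> a < b then 0 else nat a choose nat b)"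

definition Amat :: "'a::field \<Rightarrow> 'a \<Rightarrow> nat \<Rightarrow> nat \<Rightarrow> nat \<Rightarrow> 'a" where
  "Amat x y n i j =
    (if i = j \<and> i < n - 1 then (1 + x) * (1 + y) / (x * y)
     else if j = i + 1 \<and> i < n - 1 then - 1 / (x * y)
     else if i = n - 1 \<and> j = n - 1 then (x * y - of_nat (n - 1) * (x + y)) / (x * y)
     else if i = n - 1 \<and> j < n - 1 then
       (-1) ^ (n + j) / (x * y) *
       (\<Sum>l = j..n.
          of_nat (ibinom (int l) (int j) * ibinom (int n + int j - 1 - int l) (int j))
            * x powi (int l - int j) * y powi (int n - 1 - int l)
        + of_nat (ibinom (int l) (int j) * ibinom (int n + int j - int l) (int j))
            * x powi (int l - int j) * y powi (int n - int l))
     else 0)"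

end

theory Submission
  imports Defs "HOL-Computational_Algebra.Formal_Power_Series"
begin
unbundle fps_syntax


definition Ln :: "nat \<Rightarrow> int list set" where
  "Ln N = {ss. set ss \<subseteq> {-1, 0, 1} \<and> length ss = N}"

lemma finite_Ln: "finite (Ln N)"
  unfolding Ln_def by (rule finite_lists_length_eq) simp

lemma Ln_0: "Ln 0 = {[]}"
  unfolding Ln_def by auto

lemma Ln_Suc: "Ln (Suc N) = (\<lambda>(s,ss). s#ss) ` ({-1,0,1} \<times> Ln N)"
  unfolding Ln_def
  by (auto simp: length_Suc_conv image_iff)

lemma sum_Ln_Suc:
  "(\<Sum>ss\<in>Ln (Suc N). f ss) =
     (\<Sum>ss\<in>Ln N. f ((-1)#ss)) + (\<Sum>ss\<in>Ln N. f (0#ss)) + (\<Sum>ss\<in>Ln N. f (1#ss))"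
proof -
  have inj: "inj_on (\<lambda>(s,ss). s#ss) ({-1,0,1::int} \<times> Ln N)"
    by (auto simp: inj_on_def)
  have "(\<Sum>ss\<in>Ln (Suc N). f ss) = (\<Sum>p\<in>{-1,0,1::int} \<times> Ln N. f (fst p # snd p))"
    unfolding Ln_Suc by (subst sum.reindex[OF inj]) (simp add: case_prod_beta)
  also have "\<dots> = (\<Sum>s\<in>{-1,0,1::int}. \<Sum>ss\<in>Ln N. f (s#ss))"
    by (simp add: sum.cartesian_product case_prod_beta)
  also have "\<dots> = (\<Sum>ss\<in>Ln N. f ((-1)#ss)) + (\<Sum>ss\<in>Ln N. f (0#ss)) + (\<Sum>ss\<in>Ln N. f (1#ss))"
    by (simp add: add.assoc)
  finally show ?thesis .
qed

definition np :: "int \<Rightarrow> int list \<Rightarrow> bool" where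
  "np k ss = (\<forall>i\<le>length ss. k + sum_list (take i ss) \<ge> 0)"

lemma np_Nil[simp]: "np k [] = (k \<ge> 0)"
  by (simp add: np_def)

lemma np_Cons[simp]: "np k (s#ss) = (k \<ge> 0 \<and> np (k+s) ss)"
proof
  assume h: "np k (s#ss)"
  have "k \<ge> 0" using h[unfolded np_def, rule_format, of 0] by simp
  moreover have "np (k+s) ss"
    unfolding np_def
  proof (intro allI impI)
    fix i assume "i \<le> length ss"
    then show "k + s + sum_list (take i ss) \<ge> 0"
      using h[unfolded np_def, rule_format, of "Suc i"] by (simp add: add.assoc)
  qed
  ultimately show "k \<ge> 0 \<and> np (k+s) ss" by simp
next
  assume h: "k \<ge> 0 \<and> np (k+s) ss"
  show "np k (s#ss)"
    unfolding np_def
  proof (intro allI impI)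
    fix i assume i: "i \<le> length (s#ss)"
    show "k + sum_list (take i (s#ss)) \<ge> 0"
    proof (cases i)
      case 0 then show ?thesis using h by simp
    next
      case (Suc i')
      then have "i' \<le> length ss" using i by simp
      then show ?thesis using h[THEN conjunct2, unfolded np_def, rule_format, of i'] Suc
        by (simp add: add.assoc)
    qed
  qed
qed

lemma np_neg: "k < 0 \<Longrightarrow> \<not> np k ss"
  by (cases ss) auto

lemma np_end: "np k ss \<Longrightarrow> k + sum_list ss \<ge> 0"
  unfolding np_def by (metis order_refl take_all)

lemma path_wt_Cons[simp]: "path_wt x y (s#ss) = step_wt x y s * path_wt x y ss"
  by (simp add: path_wt_def)

lemma path_wt_Nil[simp]: "path_wt x y [] = 1"
  by (simp add: path_wt_def)

lemma step_wt_vals[simp]: "step_wt x y 1 = 1" "step_wt x y 0 = x + y" "step_wt x y (-1) = x * y"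
  by (simp_all add: step_wt_def)

lemma sum_list_bound: "set ss \<subseteq> {-1,0,1} \<Longrightarrow> sum_list ss \<le> int (length ss) \<and> - int (length ss) \<le> sum_list ss"
  by (induction ss) auto

definition T :: "'a::field \<Rightarrow> 'a \<Rightarrow> nat \<Rightarrow> int \<Rightarrow> 'a" where
  "T x y N k = (\<Sum>ss\<in>Ln N. if np k ss then path_wt x y ss else 0)"

definition p :: "'a::field \<Rightarrow> 'a \<Rightarrow> nat \<Rightarrow> int \<Rightarrow> 'a" where
  "p x y N k = (\<Sum>ss\<in>Ln N. if np k ss \<and> k + sum_list ss = 0 then path_wt x y ss else 0)"

definition U :: "'a::field \<Rightarrow> 'a \<Rightarrow> nat \<Rightarrow> nat \<Rightarrow> int \<Rightarrow> 'a" where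
  "U x y n N k = (\<Sum>ss\<in>Ln N. if int n \<le> k + sum_list ss then path_wt x y ss else 0)"

lemma T_neg: "k < 0 \<Longrightarrow> T x y N k = 0"
  by (simp add: T_def np_neg)

lemma p_neg: "k < 0 \<Longrightarrow> p x y N k = 0"
  by (simp add: p_def np_neg)

lemma T_0: "T x y 0 k = (if k \<ge> 0 then 1 else 0)"
  by (simp add: T_def Ln_0)

lemma p_0: "p x y 0 k = (if k = 0 then 1 else 0)"
  by (simp add: p_def Ln_0)

lemma U_0: "U x y n 0 k = (if int n \<le> k then 1 else 0)"
  by (simp add: U_def Ln_0)

lemma T_Suc: "k \<ge> 0 \<Longrightarrow> T x y (Suc N) k = T x y N (k+1) + (x+y) * T x y N k + x*y * T x y N (k-1)"
  unfolding T_def sum_Ln_Suc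
  by (simp add: sum_distrib_left if_distrib algebra_simps cong: if_cong)

lemma p_Suc: "k \<ge> 0 \<Longrightarrow> p x y (Suc N) k = p x y N (k+1) + (x+y) * p x y N k + x*y * p x y N (k-1)"
  unfolding p_def sum_Ln_Suc
  by (simp add: sum_distrib_left if_distrib algebra_simps cong: if_cong)

lemma U_Suc: "U x y n (Suc N) k = U x y n N (k+1) + (x+y) * U x y n N k + x*y * U x y n N (k-1)"
  unfolding U_def sum_Ln_Suc
  by (simp add: sum_distrib_left if_distrib algebra_simps cong: if_cong)

lemma U_small: "k + int N < int n \<Longrightarrow> U x y n N k = 0"
  unfolding U_def
  by (rule sum.neutral) (auto simp: Ln_def dest!: sum_list_bound)



lemma PPplus_eq: "PPplus x y N k l = (\<Sum>ss\<in>Ln N. if np k ss \<and> k + sum_list ss = l then path_wt x y ss else 0)"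
proof -
  have "paths_plus N k l = {ss \<in> Ln N. np k ss \<and> k + sum_list ss = l}"
    by (auto simp: paths_plus_def paths_def Ln_def np_def)
  then show ?thesis unfolding PPplus_def by (simp add: sum.inter_filter finite_Ln)
qed

lemma PP_eq: "PP x y N k l = (\<Sum>ss\<in>Ln N. if k + sum_list ss = l then path_wt x y ss else 0)"
proof -
  have "paths N k l = {ss \<in> Ln N. k + sum_list ss = l}"
    by (auto simp: paths_def Ln_def)
  then show ?thesis unfolding PP_def by (simp add: sum.inter_filter finite_Ln)
qed

lemma p_conn: "PPplus x y N k 0 = p x y N k"
  by (simp add: PPplus_eq p_def)

lemma T_conn:
  assumes k: "k \<ge> 0"
  shows "Sum_any (\<lambda>l::nat. PPplus x y N k (int l)) = T x y N k"
proof -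
  define B where "B = nat k + N"
  have "Sum_any (\<lambda>l::nat. PPplus x y N k (int l)) = (\<Sum>l\<in>{..B}. PPplus x y N k (int l))"
  proof (rule Sum_any.expand_superset)
    show "{l. PPplus x y N k (int l) \<noteq> 0} \<subseteq> {..B}"
    proof
      fix l assume "l \<in> {l. PPplus x y N k (int l) \<noteq> 0}"
      then obtain ss where "ss \<in> Ln N" "(if np k ss \<and> k + sum_list ss = int l then path_wt x y ss else 0) \<noteq> 0"
        unfolding PPplus_eq mem_Collect_eq by (blast dest: sum.not_neutral_contains_not_neutral)
      then have "ss \<in> Ln N" "k + sum_list ss = int l" by (auto split: if_splits)
      then show "l \<in> {..B}" using k sum_list_bound[of ss] by (auto simp: Ln_def B_def)
    qed
  qed simp
  also have "\<dots> = (\<Sum>ss\<in>Ln N. \<Sum>l\<in>{..B}. if np k ss \<and> k + sum_list ss = int l then path_wt x y ss else 0)"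
    unfolding PPplus_eq by (rule sum.swap)
  also have "\<dots> = (\<Sum>ss\<in>Ln N. if np k ss then path_wt x y ss else 0)"
  proof (rule sum.cong[OF refl])
    fix ss assume ss: "ss \<in> Ln N"
    have "(\<Sum>l\<in>{..B}. if np k ss \<and> k + sum_list ss = int l then path_wt x y ss else 0)
        = (\<Sum>l\<in>{..B}. if nat (k + sum_list ss) = l then (if np k ss then path_wt x y ss else 0) else 0)"
      using np_end[of k ss] by (intro sum.cong[OF refl]) (cases "np k ss"; force)
    also have "\<dots> = (if nat (k + sum_list ss) \<in> {..B} then (if np k ss then path_wt x y ss else 0) else 0)"
      by (rule sum.delta') simp
    also have "\<dots> = (if np k ss then path_wt x y ss else 0)"
    proof -
      have "length ss = N" "sum_list ss \<le> int (length ss)" using ss sum_list_bound[of ss] by (auto simp: Ln_def)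
      then have "nat (k + sum_list ss) \<in> {..B}" using k unfolding B_def by simp
      then show ?thesis by simp
    qed
    finally show "(\<Sum>l\<in>{..B}. if np k ss \<and> k + sum_list ss = int l then path_wt x y ss else 0)
        = (if np k ss then path_wt x y ss else 0)" .
  qed
  finally show ?thesis by (simp add: T_def)
qed

lemma U_conn:
  assumes k: "k \<ge> 0"
  shows "Sum_any (\<lambda>l::nat. PP x y N 0 (int n - k + int l)) = U x y n N k"
proof -
  define B where "B = nat k + N"
  have "Sum_any (\<lambda>l::nat. PP x y N 0 (int n - k + int l)) = (\<Sum>l\<in>{..B}. PP x y N 0 (int n - k + int l))"
  proof (rule Sum_any.expand_superset)
    show "{l. PP x y N 0 (int n - k + int l) \<noteq> 0} \<subseteq> {..B}"
    proof
      fix l assume "l \<in> {l. PP x y N 0 (int n - k + int l) \<noteq> 0}"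
      then obtain ss where "ss \<in> Ln N" "(if 0 + sum_list ss = int n - k + int l then path_wt x y ss else 0) \<noteq> 0"
        unfolding PP_eq mem_Collect_eq by (blast dest: sum.not_neutral_contains_not_neutral)
      then have "ss \<in> Ln N" "sum_list ss = int n - k + int l" by (auto split: if_splits)
      then show "l \<in> {..B}" using k sum_list_bound[of ss] by (auto simp: Ln_def B_def)
    qed
  qed simp
  also have "\<dots> = (\<Sum>ss\<in>Ln N. \<Sum>l\<in>{..B}. if sum_list ss = int n - k + int l then path_wt x y ss else 0)"
    unfolding PP_eq by (simp add: sum.swap[of _ "{..B}"])
  also have "\<dots> = (\<Sum>ss\<in>Ln N. if int n \<le> k + sum_list ss then path_wt x y ss else 0)"
  proof (rule sum.cong[OF refl])
    fix ss assume ss: "ss \<in> Ln N"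
    have "(\<Sum>l\<in>{..B}. if sum_list ss = int n - k + int l then path_wt x y ss else 0)
        = (\<Sum>l\<in>{..B}. if nat (k + sum_list ss - int n) = l then (if int n \<le> k + sum_list ss then path_wt x y ss else 0) else 0)"
      by (intro sum.cong[OF refl]) (cases "int n \<le> k + sum_list ss"; force)
    also have "\<dots> = (if nat (k + sum_list ss - int n) \<in> {..B} then (if int n \<le> k + sum_list ss then path_wt x y ss else 0) else 0)"
      by (rule sum.delta') simp
    also have "\<dots> = (if int n \<le> k + sum_list ss then path_wt x y ss else 0)"
    proof -
      have "length ss = N" "sum_list ss \<le> int (length ss)" using ss sum_list_bound[of ss] by (auto simp: Ln_def)
      then have "nat (k + sum_list ss - int n) \<in> {..B}" using k unfolding B_def by simp
      then show ?thesis by simp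
    qed
    finally show "(\<Sum>l\<in>{..B}. if sum_list ss = int n - k + int l then path_wt x y ss else 0)
        = (if int n \<le> k + sum_list ss then path_wt x y ss else 0)" .
  qed
  finally show ?thesis by (simp add: U_def)
qed




definition gf :: "'a::field \<Rightarrow> nat \<Rightarrow> 'a fps" where
  "gf x s = Abs_fps (\<lambda>r. of_nat ((r + s - 1) choose r) * x^r)"

lemma gf_nth: "gf x s $ r = of_nat ((r + s - 1) choose r) * x^r"
  by (simp add: gf_def)

lemma gf_0: "gf x 0 = 1"
  by (rule fps_ext) (auto simp: gf_nth binomial_eq_0)

lemma gf_rec: "(1 - fps_const x * fps_X) * gf x (Suc s) = gf x s"
proof (rule fps_ext)
  fix r
  have e: "(1 - fps_const x * fps_X) * gf x (Suc s) = gf x (Suc s) - fps_const x * (fps_X * gf x (Suc s))"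
    by (simp add: algebra_simps)
  show "((1 - fps_const x * fps_X) * gf x (Suc s)) $ r = gf x s $ r"
  proof (cases r)
    case 0 then show ?thesis by (simp add: e gf_nth)
  next
    case (Suc r')
    have "((Suc r' + s) choose (Suc r')) = ((r' + s) choose r') + ((r' + s) choose (Suc r'))"
      by (simp add: binomial_Suc_Suc[symmetric] del: binomial_Suc_Suc)
    then have "of_nat ((Suc r' + s) choose (Suc r')) * x ^ Suc r' - x * (of_nat ((r' + s) choose r') * x ^ r')
      = of_nat ((r' + s) choose (Suc r')) * (x:: 'a) ^ Suc r'"
      by (simp add: algebra_simps)
    then show ?thesis using Suc by (simp add: e gf_nth)
  qed
qed

definition Hs :: "'a::field \<Rightarrow> 'a \<Rightarrow> nat \<Rightarrow> 'a fps" where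
  "Hs x y s = gf x s * gf y s"

definition qq :: "'a::field \<Rightarrow> 'a \<Rightarrow> 'a fps" where
  "qq x y = (1 - fps_const x * fps_X) * (1 - fps_const y * fps_X)"

lemma Hs_rec: "qq x y * Hs x y (Suc s) = Hs x y s"
proof -
  have "qq x y * Hs x y (Suc s) = ((1 - fps_const x * fps_X) * gf x (Suc s)) * ((1 - fps_const y * fps_X) * gf y (Suc s))"
    by (simp add: qq_def Hs_def ac_simps)
  then show ?thesis by (simp add: gf_rec Hs_def)
qed

lemma qq_mult: "qq x y * f = f - fps_const (x+y) * (fps_X * f) + fps_const (x*y) * (fps_X^2 * f)"
  by (simp add: qq_def algebra_simps power2_eq_square flip: fps_const_mult fps_const_add)

lemma qq_mult_nth: "(qq x y * f) $ r = f $ r - (x+y) * (if r = 0 then 0 else f $ (r - 1))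
   + x*y * (if r < 2 then 0 else f $ (r - 2))"
  by (simp add: qq_mult fps_X_power_mult_nth)

definition h :: "'a::field \<Rightarrow> 'a \<Rightarrow> nat \<Rightarrow> int \<Rightarrow> 'a" where
  "h x y s r = (if r < 0 then 0 else Hs x y s $ nat r)"

lemma h_neg: "r < 0 \<Longrightarrow> h x y s r = 0"
  by (simp add: h_def)

lemma H1: "h x y (Suc s) r - (x+y) * h x y (Suc s) (r-1) + x*y * h x y (Suc s) (r-2) = h x y s r"
proof (cases "r < 0")
  case True then show ?thesis by (simp add: h_def)
next
  case False
  then obtain t where t: "r = int t" by (metis nonneg_int_cases not_less)
  have "h x y s r = (qq x y * Hs x y (Suc s)) $ t" by (simp add: Hs_rec h_def t)
  also have "\<dots> = h x y (Suc s) r - (x+y) * h x y (Suc s) (r-1) + x*y * h x y (Suc s) (r-2)"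
    unfolding qq_mult_nth by (simp add: h_def t nat_diff_distrib)
  finally show ?thesis by simp
qed

lemma h_0: "h x y 0 r = (if r = 0 then 1 else 0)"
  by (simp add: h_def Hs_def gf_0)

lemma h_s0: "h x y s 0 = 1"
  by (simp add: h_def Hs_def gf_nth)

lemma h_s1: "h x y s 1 = of_nat s * (x + y)"
  by (simp add: h_def Hs_def gf_nth algebra_simps)

lemma h_explicit:
  "h x y (Suc m) (int r) = (\<Sum>a=0..r. of_nat ((a+m) choose m) * x^a * of_nat ((r-a+m) choose m) * y^(r-a))"
proof -
  have c: "\<And>a. (a + m) choose a = (a+m) choose m"
    by (metis add_diff_cancel_left' binomial_symmetric le_add2 add.commute)
  have "h x y (Suc m) (int r) = (\<Sum>a=0..r. of_nat ((a+m) choose a) * x^a * (of_nat ((r-a+m) choose (r-a)) * y^(r-a)))"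
    by (simp add: h_def Hs_def fps_mult_nth gf_nth algebra_simps)
  also have "\<dots> = (\<Sum>a=0..r. of_nat ((a+m) choose m) * x^a * of_nat ((r-a+m) choose m) * y^(r-a))"
  proof (intro sum.cong refl)
    fix a assume "a \<in> {0..r}"
    then have "(r - a + m) choose (r - a) = (r - a + m) choose m" by (rule_tac c)
    then show "of_nat ((a+m) choose a) * x^a * (of_nat ((r-a+m) choose (r-a)) * y^(r-a))
      = of_nat ((a+m) choose m) * (x::'a)^a * of_nat ((r-a+m) choose m) * y^(r-a)"
      by (simp add: c mult_ac)
  qed
  finally show ?thesis .
qed



lemma ibinom_int: "ibinom (int a) (int b) = a choose b"
  by (simp add: ibinom_def binomial_eq_0)

lemma Amat_low:
  assumes "i + 1 < n"
  shows "Amat x y n i m = (if m = i then (1 + x) * (1 + y) / (x * y) else if m = i + 1 then - 1 / (x * y) else 0)"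
proof -
  have "i < n - 1" "i \<noteq> n - 1" using assms by simp_all
  then show ?thesis unfolding Amat_def by (cases "m = i") simp_all
qed

lemma Amat_last_last:
  assumes "1 \<le> n"
  shows "Amat x y n (n-1) (n-1) = (x * y - of_nat (n - 1) * (x + y)) / (x * y)"
  using assms by (simp add: Amat_def)

lemma shift_sum: fixes m r :: nat shows "sum g {m..r+m} = sum (\<lambda>a. g (a+m)) {0..r}"
  using sum.shift_bounds_cl_nat_ivl[of g 0 m r] by simp

lemma X2_sum:
  assumes "m < n"
  shows "(\<Sum>l = m..n. of_nat (ibinom (int l) (int m) * ibinom (int n + int m - int l) (int m))
            * x powi (int l - int m) * y powi (int n - int l))
       = h x y (Suc m) (int n - int m)"
proof -
  define r where "r = n - m"
  have n: "n = r + m" using assms r_def by simp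
  have "(\<Sum>l = m..n. of_nat (ibinom (int l) (int m) * ibinom (int n + int m - int l) (int m))
            * x powi (int l - int m) * y powi (int n - int l))
      = (\<Sum>a = 0..r. of_nat (ibinom (int (a+m)) (int m) * ibinom (int n + int m - int (a+m)) (int m))
            * x powi (int (a+m) - int m) * y powi (int n - int (a+m)))"
    unfolding n by (rule shift_sum)
  also have "\<dots> = (\<Sum>a=0..r. of_nat ((a+m) choose m) * x^a * of_nat ((r-a+m) choose m) * y^(r-a))"
  proof (intro sum.cong refl)
    fix a assume a: "a \<in> {0..r}"
    then have e1: "int n + int m - int (a+m) = int (r - a + m)" and e2: "int (a+m) - int m = int a"
      and e3: "int n - int (a+m) = int (r - a)" using n by auto
    show "of_nat (ibinom (int (a+m)) (int m) * ibinom (int n + int m - int (a+m)) (int m))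
            * x powi (int (a+m) - int m) * y powi (int n - int (a+m))
        = of_nat ((a+m) choose m) * x^a * of_nat ((r-a+m) choose m) * y^(r-a)"
      unfolding e1 e2 e3 ibinom_int power_int_of_nat by (simp add: mult_ac)
  qed
  also have "\<dots> = h x y (Suc m) (int n - int m)"
    using h_explicit[of x y m r] n by simp
  finally show ?thesis .
qed

lemma X1_sum:
  assumes "m < n"
  shows "(\<Sum>l = m..n. of_nat (ibinom (int l) (int m) * ibinom (int n + int m - 1 - int l) (int m))
            * x powi (int l - int m) * y powi (int n - 1 - int l))
       = h x y (Suc m) (int n - 1 - int m)"
proof -
  define r where "r = n - m - 1"
  have n: "n = Suc r + m" using assms r_def by simp
  let ?F = "\<lambda>l. of_nat (ibinom (int l) (int m) * ibinom (int n + int m - 1 - int l) (int m))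
            * x powi (int l - int m) * y powi (int n - 1 - int l)"
  have "(\<Sum>l = m..n. ?F l) = (\<Sum>a = 0..Suc r. ?F (a+m))"
    unfolding n by (rule shift_sum)
  also have "\<dots> = (\<Sum>a = 0..r. ?F (a+m)) + ?F (Suc r + m)"
    by (rule sum.atLeast0_atMost_Suc)
  also have "?F (Suc r + m) = 0"
  proof -
    have "int n + int m - 1 - int (Suc r + m) = int m - 1" using n by simp
    then have "ibinom (int n + int m - 1 - int (Suc r + m)) (int m) = 0" by (simp add: ibinom_def)
    then show ?thesis by (simp only: mult_0_right of_nat_0 mult_zero_left)
  qed
  also have "(\<Sum>a = 0..r. ?F (a+m)) = (\<Sum>a=0..r. of_nat ((a+m) choose m) * x^a * of_nat ((r-a+m) choose m) * y^(r-a))"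
  proof (intro sum.cong refl)
    fix a assume a: "a \<in> {0..r}"
    then have e1: "int n + int m - 1 - int (a+m) = int (r - a + m)" and e2: "int (a+m) - int m = int a"
      and e3: "int n - 1 - int (a+m) = int (r - a)" using n by auto
    show "?F (a+m) = of_nat ((a+m) choose m) * x^a * of_nat ((r-a+m) choose m) * y^(r-a)"
      unfolding e1 e2 e3 ibinom_int power_int_of_nat by (simp add: mult_ac)
  qed
  also have "\<dots> + 0 = h x y (Suc m) (int n - 1 - int m)"
    using h_explicit[of x y m r] n by simp
  finally show ?thesis .
qed

lemma Amat_last_low:
  assumes "m + 1 < n" and xy: "x * y \<noteq> 0"
  shows "x * y * Amat x y n (n-1) m = (-1)^(n+m) * (h x y (Suc m) (int n - 1 - int m) + h x y (Suc m) (int n - int m))"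
proof -
  have "Amat x y n (n-1) m = (-1) ^ (n + m) / (x * y) *
       (\<Sum>l = m..n.
          of_nat (ibinom (int l) (int m) * ibinom (int n + int m - 1 - int l) (int m))
            * x powi (int l - int m) * y powi (int n - 1 - int l)
        + of_nat (ibinom (int l) (int m) * ibinom (int n + int m - int l) (int m))
            * x powi (int l - int m) * y powi (int n - int l))"
    using assms by (simp add: Amat_def)
  also have "\<dots> = (-1) ^ (n + m) / (x * y) * (h x y (Suc m) (int n - 1 - int m) + h x y (Suc m) (int n - int m))"
    using assms by (simp only: sum.distrib X1_sum X2_sum)
  finally show ?thesis using xy by simp
qed



lemma TS: "T x y (Suc N) k = (1+x)*(1+y) * T x y N k - x*y * p x y N k"
proof (induction N arbitrary: k)
  case 0
  show ?case
  proof (cases "k < 0")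
    case True then show ?thesis by (simp add: T_neg p_neg)
  next
    case False
    then show ?thesis by (simp add: T_Suc T_0 p_0 algebra_simps)
  qed
next
  case (Suc N)
  show ?case
  proof (cases "k < 0")
    case True then show ?thesis by (simp add: T_neg p_neg)
  next
    case False
    then have k: "k \<ge> 0" by simp
    have "T x y (Suc (Suc N)) k = T x y (Suc N) (k+1) + (x+y) * T x y (Suc N) k + x*y * T x y (Suc N) (k-1)"
      using k by (rule T_Suc)
    also have "\<dots> = (1+x)*(1+y) * (T x y N (k+1) + (x+y) * T x y N k + x*y * T x y N (k-1))
        - x*y * (p x y N (k+1) + (x+y) * p x y N k + x*y * p x y N (k-1))"
      unfolding Suc.IH by (simp add: algebra_simps)
    also have "\<dots> = (1+x)*(1+y) * T x y (Suc N) k - x*y * p x y (Suc N) k"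
      using k by (simp add: T_Suc p_Suc)
    finally show ?thesis .
  qed
qed

definition W :: "'a::field \<Rightarrow> 'a \<Rightarrow> nat \<Rightarrow> int \<Rightarrow> 'a" where
  "W x y n k = (\<Sum>m<Suc n. (-1)^(n+m) * h x y (Suc m) (int n - int m) * T x y m k)"

lemma W_ext:
  assumes "Suc n \<le> B"
  shows "W x y n k = (\<Sum>m<B. (-1)^(n+m) * h x y (Suc m) (int n - int m) * T x y m k)"
  unfolding W_def
proof (rule sum.mono_neutral_left)
  show "\<forall>i\<in>{..<B} - {..<Suc n}. (-1)^(n+i) * h x y (Suc i) (int n - int i) * T x y i k = 0"
    by (auto simp: h_neg)
qed (use assms in auto)

lemma W_neg: "k < 0 \<Longrightarrow> W x y n k = 0"
  by (simp add: W_def T_neg)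

lemma WR:
  assumes k: "k \<ge> 0"
  shows "W x y (Suc n) k = W x y n (k+1) + x*y * W x y n (k-1) - x*y * (if n = 0 then 0 else W x y (n-1) k)"
proof -
  define B where "B = Suc (Suc (Suc n))"
  define S1 where "S1 = (\<Sum>m<B. (-1)^(Suc n+m) * h x y m (int (Suc n) - int m) * T x y m k)"
  define S3 where "S3 = (\<Sum>m<B. (-1)^(Suc n+m) * h x y (Suc m) (int n - 1 - int m) * T x y m k)"
  have W1: "W x y (Suc n) k = (\<Sum>m<B. (-1)^(Suc n+m) * h x y (Suc m) (int (Suc n) - int m) * T x y m k)"
    by (rule W_ext) (simp add: B_def)
  have W0: "W x y n k = (\<Sum>m<B. (-1)^(n+m) * h x y (Suc m) (int n - int m) * T x y m k)"
    by (rule W_ext) (simp add: B_def)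
  have "W x y (Suc n) k = S1 - (x+y) * W x y n k - x*y * S3"
    unfolding W1 W0 S1_def S3_def sum_distrib_left sum_subtractf[symmetric]
  proof (rule sum.cong[OF refl])
    fix m
    have hh: "h x y (Suc m) (int (Suc n) - int m) = h x y m (int (Suc n) - int m)
        + (x+y) * h x y (Suc m) (int n - int m) - x*y * h x y (Suc m) (int n - 1 - int m)"
      using H1[of x y m "int (Suc n) - int m"] by (simp add: algebra_simps)
    show "(-1)^(Suc n+m) * h x y (Suc m) (int (Suc n) - int m) * T x y m k =
      (-1)^(Suc n+m) * h x y m (int (Suc n) - int m) * T x y m k
      - (x+y) * ((-1)^(n+m) * h x y (Suc m) (int n - int m) * T x y m k)
      - x*y * ((-1)^(Suc n+m) * h x y (Suc m) (int n - 1 - int m) * T x y m k)"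
      unfolding hh by (simp add: algebra_simps)
  qed
  moreover have "S1 = W x y n (k+1) + (x+y) * W x y n k + x*y * W x y n (k-1)"
  proof -
    have "S1 = (-1)^(Suc n) * h x y 0 (int (Suc n)) * T x y 0 k
       + (\<Sum>m<Suc (Suc n). (-1)^(Suc n+Suc m) * h x y (Suc m) (int (Suc n) - int (Suc m)) * T x y (Suc m) k)"
      unfolding S1_def B_def by (subst sum.lessThan_Suc_shift) simp
    also have "\<dots> = (\<Sum>m<Suc (Suc n). (-1)^(n+m) * h x y (Suc m) (int n - int m) *
        (T x y m (k+1) + (x+y) * T x y m k + x*y * T x y m (k-1)))"
      using k by (simp add: h_0 T_Suc)
    also have "\<dots> = (\<Sum>m<Suc (Suc n). (-1)^(n+m) * h x y (Suc m) (int n - int m) * T x y m (k+1))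
       + (x+y) * (\<Sum>m<Suc (Suc n). (-1)^(n+m) * h x y (Suc m) (int n - int m) * T x y m k)
       + x*y * (\<Sum>m<Suc (Suc n). (-1)^(n+m) * h x y (Suc m) (int n - int m) * T x y m (k-1))"
      by (simp add: sum.distrib sum_distrib_left algebra_simps)
    also have "\<dots> = W x y n (k+1) + (x+y) * W x y n k + x*y * W x y n (k-1)"
      by (simp add: W_ext[of n "Suc (Suc n)"])
    finally show ?thesis .
  qed
  moreover have "S3 = (if n = 0 then 0 else W x y (n-1) k)"
  proof (cases n)
    case 0
    then show ?thesis by (simp add: S3_def h_neg)
  next
    case (Suc n')
    have "W x y n' k = (\<Sum>m<B. (-1)^(n'+m) * h x y (Suc m) (int n' - int m) * T x y m k)"
      by (rule W_ext) (simp add: B_def Suc)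
    also have "\<dots> = S3"
      unfolding S3_def Suc by (intro sum.cong refl) simp
    finally have "W x y n' k = S3" .
    then show ?thesis using Suc by simp
  qed
  ultimately show ?thesis by (simp add: algebra_simps)
qed

lemma W0_val: "W x y 0 k = (if k \<ge> 0 then 1 else 0)"
  by (simp add: W_def h_s0 T_0)

lemma DL: "W x y n k - (if n = 0 then 0 else W x y (n-1) k) = (x*y)^n * (if int n \<le> k then 1 else 0)"
proof (induction n arbitrary: k rule: less_induct)
  case (less n)
  show ?case
  proof (cases "k < 0")
    case True then show ?thesis by (simp add: W_neg)
  next
    case False
    then have k: "k \<ge> 0" by simp
    consider "n = 0" | "n = 1" | n' where "n = Suc (Suc n')" by (metis One_nat_def not0_implies_Suc)
    then show ?thesis
    proof cases
      case 1 then show ?thesis using k by (simp add: W0_val)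
    next
      case 2 then show ?thesis using k WR[OF k, of x y 0] by (simp add: W0_val)
    next
      case 3
      have IH1: "\<And>k. W x y (Suc n') k - W x y n' k = (x*y)^(Suc n') * (if int (Suc n') \<le> k then 1 else 0)"
        using less.IH[of "Suc n'"] 3 by simp
      have IH0: "\<And>k. W x y n' k - (if n' = 0 then 0 else W x y (n'-1) k) = (x*y)^n' * (if int n' \<le> k then 1 else 0)"
        using less.IH[of n'] 3 by simp
      define A where "A = (if n' = 0 then 0 else W x y (n'-1) k)"
      have e1: "W x y n k = W x y (Suc n') (k+1) + x*y * W x y (Suc n') (k-1) - x*y * W x y n' k"
        using WR[OF k, of x y "Suc n'"] 3 by simp
      have e2: "W x y (Suc n') k = W x y n' (k+1) + x*y * W x y n' (k-1) - x*y * A"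
        using WR[OF k, of x y n'] unfolding A_def .
      have "W x y n k - W x y (Suc n') k
          = (W x y (Suc n') (k+1) - W x y n' (k+1)) + x*y * (W x y (Suc n') (k-1) - W x y n' (k-1))
            - x*y * (W x y n' k - A)"
        unfolding e1 e2 by (simp add: algebra_simps)
      also have "\<dots> = (W x y (Suc n') (k+1) - W x y n' (k+1)) + x*y * (W x y (Suc n') (k-1) - W x y n' (k-1))
            - x*y * (W x y n' k - (if n' = 0 then 0 else W x y (n'-1) k))"
        unfolding A_def ..
      also have "\<dots> = (x*y)^(Suc n') * (if int (Suc n') \<le> k + 1 then 1 else 0)
          + x*y * ((x*y)^(Suc n') * (if int (Suc n') \<le> k - 1 then 1 else 0))
          - x*y * ((x*y)^n' * (if int n' \<le> k then 1 else 0))"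
        unfolding IH1 IH0 ..
      also have "\<dots> = (x*y)^n * (if int n \<le> k then 1 else 0)"
        using 3 by (auto simp: algebra_simps)
      finally show ?thesis using 3 by simp
    qed
  qed
qed



lemma base:
  fixes x y :: "'a::field"
  assumes n: "n \<ge> 1" and x: "x \<noteq> 0" and y: "y \<noteq> 0" and k: "k \<ge> 0"
  shows "(\<Sum>m<n. Amat x y n (n-1) m * T x y m k) - p x y (n-1) k = (x*y)^(n-1) * (if int n \<le> k then 1 else 0)"
proof -
  obtain n' where n': "n = Suc n'" using n by (cases n) auto
  have xy: "x * y \<noteq> 0" using x y by simp
  define c where "c = (1+x)*(1+y)"
  define bb where "bb m = (-1)^(n+m) * (h x y (Suc m) (int n - 1 - int m) + h x y (Suc m) (int n - int m))" for m
  have C1: "x * y * Amat x y n (n-1) m = bb m + (if m = n' then c else 0)" if m: "m < n" for m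
  proof (cases "m = n'")
    case True
    have a: "x * y * Amat x y n (n-1) m = x * y - of_nat n' * (x + y)"
      using Amat_last_last[OF n, of x y] True n' xy by simp
    have b: "bb m = - (1 + (of_nat n' + 1) * (x + y))"
      unfolding bb_def using True n' by (simp add: h_s0 h_s1)
    show ?thesis unfolding a b using True by (simp add: c_def algebra_simps)
  next
    case False
    then have "m + 1 < n" using m n' by simp
    then show ?thesis using Amat_last_low[of m n x y] xy False by (simp add: bb_def)
  qed
  have C2: "(\<Sum>m<Suc n. bb m * T x y m k) = W x y n k - W x y n' k"
  proof -
    have e: "W x y n' k = (\<Sum>m<Suc n. (-1)^(n'+m) * h x y (Suc m) (int n' - int m) * T x y m k)"
      by (rule W_ext) (simp add: n')
    show ?thesis
      unfolding e W_def[of x y n k] sum_subtractf[symmetric]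
      by (intro sum.cong refl) (simp add: bb_def n' algebra_simps)
  qed
  have C3: "bb n = 1" by (simp add: bb_def h_neg h_s0)
  have "x * y * (\<Sum>m<n. Amat x y n (n-1) m * T x y m k) = (\<Sum>m<n. (bb m + (if m = n' then c else 0)) * T x y m k)"
    unfolding sum_distrib_left
  proof (intro sum.cong refl)
    fix m assume "m \<in> {..<n}"
    then have "x * y * Amat x y n (n-1) m = bb m + (if m = n' then c else 0)" by (intro C1) simp
    then show "x * y * (Amat x y n (n-1) m * T x y m k) = (bb m + (if m = n' then c else 0)) * T x y m k"
      by (simp only: mult.assoc[symmetric])
  qed
  also have "\<dots> = (\<Sum>m<n. bb m * T x y m k) + c * T x y n' k"
    by (simp add: sum.distrib algebra_simps n' if_distrib cong: if_cong)
  also have "(\<Sum>m<n. bb m * T x y m k) = (\<Sum>m<Suc n. bb m * T x y m k) - T x y n k"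
    by (simp add: C3)
  also have "\<dots> = (x*y)^n * (if int n \<le> k then 1 else 0) - T x y n k"
    unfolding C2 using DL[of x y n k] n' by simp
  also have "T x y n k = c * T x y n' k - x * y * p x y n' k"
    unfolding n' c_def by (rule TS)
  finally have "x * y * (\<Sum>m<n. Amat x y n (n-1) m * T x y m k)
     = x * y * ((x*y)^n' * (if int n \<le> k then 1 else 0) + p x y n' k)"
    by (simp add: algebra_simps n')
  then have "(\<Sum>m<n. Amat x y n (n-1) m * T x y m k) = (x*y)^n' * (if int n \<le> k then 1 else 0) + p x y n' k"
    using xy by simp
  then show ?thesis using n' by simp
qed

definition L :: "'a::field \<Rightarrow> 'a \<Rightarrow> nat \<Rightarrow> nat \<Rightarrow> int \<Rightarrow> 'a" where
  "L x y n N k = (\<Sum>m<n. Amat x y n (n-1) m * T x y (m+N) k) - p x y (n-1+N) k"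

lemma L_neg: "k < 0 \<Longrightarrow> L x y n N k = 0"
  by (simp add: L_def T_neg p_neg)

lemma L_Suc: "k \<ge> 0 \<Longrightarrow> L x y n (Suc N) k = L x y n N (k+1) + (x+y) * L x y n N k + x*y * L x y n N (k-1)"
  unfolding L_def
  by (simp add: T_Suc p_Suc sum.distrib sum_distrib_left algebra_simps sum_subtractf)

lemma L_U:
  fixes x y :: "'a::field"
  assumes n: "n \<ge> 1" and x: "x \<noteq> 0" and y: "y \<noteq> 0"
  shows "N \<le> n \<Longrightarrow> k \<ge> 0 \<Longrightarrow> L x y n N k = (x*y)^(n-1) * U x y n N k"
proof (induction N arbitrary: k)
  case 0
  then show ?case using base[OF n x y, of k] by (simp add: L_def U_0)
next
  case (Suc N)
  have IH: "\<And>k. k \<ge> 0 \<Longrightarrow> L x y n N k = (x*y)^(n-1) * U x y n N k" using Suc by simp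
  have km: "L x y n N (k-1) = (x*y)^(n-1) * U x y n N (k-1)"
  proof (cases "k - 1 \<ge> 0")
    case True then show ?thesis by (rule IH)
  next
    case False
    then have "L x y n N (k-1) = 0" by (simp add: L_neg)
    moreover have "U x y n N (k-1) = 0" using False Suc.prems by (intro U_small) simp
    ultimately show ?thesis by simp
  qed
  show ?case
    using L_Suc[OF Suc.prems(2), of x y n N] IH[of "k+1"] IH[of k] km Suc.prems U_Suc[of x y n N k]
    by (simp add: algebra_simps)
qed



lemma sum_two:
  fixes f :: "nat \<Rightarrow> 'a::field"
  assumes "i + 1 < n"
  shows "(\<Sum>m<n. (if m = i then A else if m = i + 1 then B else 0) * f m) = A * f i + B * f (i+1)"
proof -
  have "(\<Sum>m<n. (if m = i then A else if m = i + 1 then B else 0) * f m)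
      = (\<Sum>m<n. (if m = i then A * f i else 0) + (if m = i + 1 then B * f (i+1) else 0))"
    by (intro sum.cong refl) auto
  also have "\<dots> = A * f i + B * f (i+1)"
    using assms by (simp add: sum.distrib)
  finally show ?thesis .
qed

theorem lemma12:
  fixes x y :: "'a::field" and n k :: nat
  assumes "x \<noteq> 0" and "y \<noteq> 0" and "n \<ge> 1"
  shows "\<forall>i<n. \<forall>j<n.
    (\<Sum>m<n. Amat x y n i m * (Sum_any (\<lambda>l::nat. PPplus x y (m + j + 1) (int k) (int l))))
    = PPplus x y (i + j + 1) (int k) 0
      + (if i + 1 < n then 0
         else (x * y) ^ (n - 1) *
              Sum_any (\<lambda>l::nat. PP x y (j + 1) 0 (int n - int k + int l)))"
proof (intro allI impI)
  fix i j assume i: "i < n" and j: "j < n"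
  have xy: "x * y \<noteq> 0" using assms by simp
  have k: "int k \<ge> 0" by simp
  have LHS: "(\<Sum>m<n. Amat x y n i m * (Sum_any (\<lambda>l::nat. PPplus x y (m + j + 1) (int k) (int l))))
     = (\<Sum>m<n. Amat x y n i m * T x y (m + j + 1) (int k))"
    by (simp add: T_conn[OF k])
  show "(\<Sum>m<n. Amat x y n i m * (Sum_any (\<lambda>l::nat. PPplus x y (m + j + 1) (int k) (int l))))
    = PPplus x y (i + j + 1) (int k) 0
      + (if i + 1 < n then 0
         else (x * y) ^ (n - 1) *
              Sum_any (\<lambda>l::nat. PP x y (j + 1) 0 (int n - int k + int l)))"
  proof (cases "i + 1 < n")
    case True
    have "(\<Sum>m<n. Amat x y n i m * T x y (m + j + 1) (int k))
        = (1 + x) * (1 + y) / (x * y) * T x y (i + j + 1) (int k) + (- 1 / (x * y)) * T x y (Suc (i + j + 1)) (int k)"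
      unfolding Amat_low[OF True] using sum_two[OF True, of _ _ "\<lambda>m. T x y (m + j + 1) (int k)"] by simp
    also have "\<dots> = p x y (i + j + 1) (int k)"
      unfolding TS using xy by (simp add: field_simps)
    finally show ?thesis using True LHS by (simp add: p_conn)
  next
    case False
    then have i': "i = n - 1" using i by simp
    have "(\<Sum>m<n. Amat x y n i m * T x y (m + j + 1) (int k)) = L x y n (j+1) (int k) + p x y (n - 1 + (j+1)) (int k)"
      unfolding L_def i' by (simp add: add.assoc)
    also have "L x y n (j+1) (int k) = (x*y)^(n-1) * U x y n (j+1) (int k)"
      using L_U[OF assms(3) assms(1) assms(2), of "j+1" "int k"] j by simp
    finally have e: "(\<Sum>m<n. Amat x y n i m * T x y (m + j + 1) (int k)) = (x*y)^(n-1) * U x y n (j+1) (int k) + p x y (i + j + 1) (int k)"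
      using i' assms(3) by simp
    have Uc: "Sum_any (\<lambda>l::nat. PP x y (j + 1) 0 (int n - int k + int l)) = U x y n (j+1) (int k)"
      by (rule U_conn[OF k])
    show ?thesis unfolding LHS Uc e p_conn using False by simp
  qed
qed


end
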